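(* Let $\mathcal{A}$ be a central, essential hyperplane arrangement in $\mathbb{R}^d$, let $\ell$ be a modular coatom of $\mathcal{A}$, and let $c$ be a chamber incident to $\ell$. Write $\mathcal{A}_\ell$ for the set of hyperplanes of $\mathcal{A}$ containing $\ell$. (i) The set of chambers $c'$ with $c'/\ell=c/\ell$ can be linearly ordered as $c_1=c,c_2,\ldots,c_t$ so that $$\varnothing=L_1(c,c_1)\subset L_1(c,c_2)\subset\cdots\subset L_1(c,c_t)=\mathcal{A}\setminus\mathcal{A}_\ell,$$ each inclusion adding exactly one hyperplane. This induces a linear order $H_1,H_2,\ldots$ on $\mathcal{A}\setminus\mathcal{A}_\ell$, listing the hyperplanes in the order in which they are added along this chain. (ii) With respect to this linear order, if $i<j<k$ and $c$ is also incident to $\ell+(H_i\cap H_k)$, then $H_i\cap H_j=H_i\cap H_k=H_j\cap H_k$.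
   Context: A central, essential arrangement is a finite set of linear hyperplanes in $\mathbb{R}^d$ with common intersection $\{0\}$. Chambers are connected components of the complement of their union; $L_1(c,c')$ is the set of hyperplanes separating chambers $c,c'$. A coatom is a line $\ell$ that is an intersection of hyperplanes of $\mathcal{A}$; it is modular if for every pair of distinct hyperplanes $H,H'\in\mathcal{A}$ not containing $\ell$, the hyperplane $\ell+(H\cap H')$ belongs to $\mathcal{A}$. For a chamber $c$, $c/\ell$ denotes the chamber of the localized arrangement $\{H/\ell: H\in\mathcal{A}, H\supseteq\ell\}$ in $\mathbb{R}^d/\ell$ containing the image of $c$. A chamber $c$ is incident to a subspace $X$ if the closure of $c$ meets $X$ in a set of the same dimension as $X$. *)

theory Defs
  imports "HOL-Analysis.Analysis"
begin

definition lin_hyperplane :: "'a::euclidean_space set \<Rightarrow> bool" where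
  "lin_hyperplane H \<longleftrightarrow> (\<exists>a. a \<noteq> 0 \<and> H = {x. a \<bullet> x = 0})"

definition central_essential_arr :: "'a::euclidean_space set set \<Rightarrow> bool" where
  "central_essential_arr A \<longleftrightarrow> finite A \<and> (\<forall>H\<in>A. lin_hyperplane H) \<and> \<Inter>A = {0}"

definition chamber :: "'a::euclidean_space set set \<Rightarrow> 'a set \<Rightarrow> bool" where
  "chamber A c \<longleftrightarrow> c \<in> components (- \<Union>A)"

definition separates :: "'a::euclidean_space set \<Rightarrow> 'a set \<Rightarrow> 'a set \<Rightarrow> bool" where
  "separates H c c' \<longleftrightarrow>
     (\<exists>a. H = {x. a \<bullet> x = 0} \<and> (\<forall>x\<in>c. a \<bullet> x < 0) \<and> (\<forall>y\<in>c'. 0 < a \<bullet> y))"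

definition L1 :: "'a::euclidean_space set set \<Rightarrow> 'a set \<Rightarrow> 'a set \<Rightarrow> 'a set set" where
  "L1 A c c' = {H \<in> A. separates H c c'}"

definition ssum :: "'a::euclidean_space set \<Rightarrow> 'a set \<Rightarrow> 'a set" where
  "ssum X Y = {x + y | x y. x \<in> X \<and> y \<in> Y}"

definition coatom :: "'a::euclidean_space set set \<Rightarrow> 'a set \<Rightarrow> bool" where
  "coatom A l \<longleftrightarrow> subspace l \<and> dim l = 1 \<and> (\<exists>B\<subseteq>A. l = \<Inter>B)"

definition modular_coatom :: "'a::euclidean_space set set \<Rightarrow> 'a set \<Rightarrow> bool" where
  "modular_coatom A l \<longleftrightarrow> coatom A l \<and>
     (\<forall>H\<in>A. \<forall>H'\<in>A. H \<noteq> H' \<longrightarrow> \<not> l \<subseteq> H \<longrightarrow> \<not> l \<subseteq> H' \<longrightarrow> ssum l (H \<inter> H') \<in> A)"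

definition loc :: "'a::euclidean_space set set \<Rightarrow> 'a set \<Rightarrow> 'a set set" where
  "loc A l = {H \<in> A. l \<subseteq> H}"

text \<open>The localized arrangement
  {H/l} in R^d/l is modelled by its preimage {H in A. l \<subseteq> H} in R^d (the
  quotient map R^d \<rightarrow> R^d/l induces a bijection between their chambers), so c/l is
  the chamber of loc A l (as an arrangement in R^d) containing c.\<close>
definition quot_chamber :: "'a::euclidean_space set set \<Rightarrow> 'a set \<Rightarrow> 'a set \<Rightarrow> 'a set" where
  "quot_chamber A l c = (THE D. D \<in> components (- \<Union>(loc A l)) \<and> c \<subseteq> D)"

definition incident :: "'a::euclidean_space set \<Rightarrow> 'a set \<Rightarrow> bool" where
  "incident c X \<longleftrightarrow> aff_dim (closure c \<inter> X) = aff_dim X"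

end

theory Submission
  imports Defs
begin

definition nrm :: "'a::euclidean_space set \<Rightarrow> 'a" where
  "nrm H = (SOME a. a \<noteq> 0 \<and> H = {x. a \<bullet> x = 0})"

definition bn :: "'a::euclidean_space \<Rightarrow> 'a set \<Rightarrow> 'a" where
  "bn v H = nrm H /\<^sub>R (nrm H \<bullet> v)"

lemma nrm_props:
  assumes "lin_hyperplane H"
  shows "nrm H \<noteq> 0 \<and> H = {x. nrm H \<bullet> x = 0}"
proof -
  have "\<exists>a. a \<noteq> 0 \<and> H = {x. a \<bullet> x = 0}" using assms by (simp add: lin_hyperplane_def)
  then show ?thesis unfolding nrm_def by (rule someI_ex)
qed

lemma bn_props:
  assumes "lin_hyperplane H" "v \<notin> H"
  shows "H = {x. bn v H \<bullet> x = 0} \<and> bn v H \<bullet> v = 1"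
proof -
  have n: "nrm H \<noteq> 0" "H = {x. nrm H \<bullet> x = 0}" using nrm_props[OF assms(1)] by auto
  have nv: "nrm H \<bullet> v \<noteq> 0" using assms(2) n by auto
  have "bn v H \<bullet> x = 0 \<longleftrightarrow> nrm H \<bullet> x = 0" for x
    using nv by (simp add: bn_def)
  then show ?thesis using n nv by (auto simp: bn_def)
qed

lemma conn_side:
  assumes "connected S" "\<forall>x\<in>S. w \<bullet> x \<noteq> 0" "x \<in> S" "y \<in> S" "w \<bullet> x < 0"
  shows "w \<bullet> y < 0"
proof (rule ccontr)
  assume "\<not> w \<bullet> y < 0"
  then have "0 \<le> w \<bullet> y" by simp
  then obtain z where "z \<in> S" "w \<bullet> z = 0"
    using connected_ivt_hyperplane[OF assms(1) assms(3) assms(4), of w 0] assms(5) by auto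
  then show False using assms(2) by auto
qed

lemma conn_side_pos:
  assumes "connected S" "\<forall>x\<in>S. w \<bullet> x \<noteq> 0" "x \<in> S" "y \<in> S" "w \<bullet> x > 0"
  shows "w \<bullet> y > 0"
proof -
  have "(-w) \<bullet> y < 0"
    by (rule conn_side[OF assms(1) _ assms(3) assms(4)]) (use assms(2,5) in auto)
  then show ?thesis by simp
qed

lemma downward_closed_prefix:
  fixes n :: nat and P :: "nat \<Rightarrow> bool"
  assumes "\<forall>i j. i \<le> j \<longrightarrow> j < n \<longrightarrow> P j \<longrightarrow> P i"
  shows "\<exists>m\<le>n. \<forall>i<n. P i \<longleftrightarrow> i < m"
  using assms
proof (induct n)
  case 0
  then show ?case by auto
next
  case (Suc n)
  have "\<forall>i j. i \<le> j \<longrightarrow> j < n \<longrightarrow> P j \<longrightarrow> P i" using Suc.prems by auto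
  then obtain m where m: "m \<le> n" "\<forall>i<n. P i \<longleftrightarrow> i < m" using Suc.hyps by auto
  show ?case
  proof (cases "P n")
    case True
    have "\<forall>i<Suc n. P i"
    proof (intro allI impI)
      fix i assume "i < Suc n"
      then have "i \<le> n" by simp
      then show "P i" using Suc.prems True by blast
    qed
    then show ?thesis by (intro exI[of _ "Suc n"]) auto
  next
    case False
    then show ?thesis using m by (intro exI[of _ m]) (auto simp: less_Suc_eq)
  qed
qed

lemma nth_notin_take:
  assumes "distinct xs" "j < length xs"
  shows "xs ! j \<notin> set (take j xs)"
proof
  assume "xs ! j \<in> set (take j xs)"
  then obtain k where "k < length (take j xs)" "take j xs ! k = xs ! j" by (auto simp: in_set_conv_nth)
  then have "k < j" "xs ! k = xs ! j" by auto
  then show False using assms nth_eq_iff_index_eq by fastforce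
qed

lemma nth_in_take:
  assumes "i < j" "j \<le> length xs"
  shows "xs ! i \<in> set (take j xs)"
  using assms by (auto simp: in_set_conv_nth intro!: exI[of _ i])

lemma quot_eq:
  assumes "D \<in> components (- \<Union>(loc A l))" "C \<noteq> {}" "C \<subseteq> D"
  shows "quot_chamber A l C = D"
  unfolding quot_chamber_def
proof (rule the_equality)
  show "D \<in> components (- \<Union> (loc A l)) \<and> C \<subseteq> D" using assms by auto
next
  fix D' assume "D' \<in> components (- \<Union> (loc A l)) \<and> C \<subseteq> D'"
  then show "D' = D" using assms components_eq by blast
qed

lemma chamber_in_quot:
  assumes "C \<in> components (- \<Union>A)"
  shows "quot_chamber A l C \<in> components (- \<Union>(loc A l)) \<and> C \<subseteq> quot_chamber A l C"
proof -
  obtain y where y: "y \<in> C" using in_components_nonempty[OF assms] by auto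
  have sub: "- \<Union>A \<subseteq> - \<Union>(loc A l)" by (auto simp: loc_def)
  have yA: "y \<in> - \<Union>A" using y in_components_subset[OF assms] by auto
  have C: "C = connected_component_set (- \<Union>A) y"
    using assms y by (metis components_iff connected_component_eq)
  define D where "D = connected_component_set (- \<Union>(loc A l)) y"
  have yl: "y \<in> - \<Union>(loc A l)" using yA sub by blast
  have D: "D \<in> components (- \<Union>(loc A l))" unfolding D_def using yl
    by (auto simp: components_iff)
  have "C \<subseteq> D" unfolding C D_def by (rule connected_component_mono[OF sub])
  then show ?thesis using quot_eq[OF D] y D by auto
qed


locale sarr =
  fixes A :: "'a::euclidean_space set set" and l c D :: "'a set" and v y0 :: 'a
  assumes fin: "finite A"
    and hyp: "\<forall>H\<in>A. lin_hyperplane H"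
    and lsub: "subspace l" and ldim: "dim l = 1"
    and modular: "\<forall>H\<in>A. \<forall>H'\<in>A. H \<noteq> H' \<longrightarrow> \<not> l \<subseteq> H \<longrightarrow> \<not> l \<subseteq> H' \<longrightarrow> ssum l (H \<inter> H') \<in> A"
    and cch: "c \<in> components (- \<Union>A)"
    and vl: "v \<in> l" and v0: "v \<noteq> 0" and vc: "v \<in> closure c"
    and Dc: "D \<in> components (- \<Union>(loc A l))" and cD: "c \<subseteq> D"
    and y0c: "y0 \<in> c"
begin

lemma memhyp: "H = {x. w \<bullet> x = 0} \<Longrightarrow> z \<in> H \<longleftrightarrow> w \<bullet> z = 0"
  by blast

definition "N = A - loc A l"
definition "b = bn v"

lemma l_span: "l = span {v}"
proof -
  have "span {v} \<subseteq> l" using vl lsub by (simp add: span_minimal)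
  moreover have "dim l \<le> dim (span {v})" using ldim v0 by simp
  ultimately have "span (span {v}) = span l" by (rule dim_eq_span)
  then show ?thesis using lsub by (metis span_eq_iff span_span)
qed

lemma l_mult: "u \<in> l \<Longrightarrow> \<exists>r. u = r *\<^sub>R v"
  using l_span by (auto simp: span_singleton)

lemma N_props:
  assumes "H \<in> N"
  shows "H = {x. b H \<bullet> x = 0} \<and> b H \<bullet> v = 1 \<and> H \<in> A"
proof -
  have HA: "H \<in> A" "\<not> l \<subseteq> H" using assms by (auto simp: N_def loc_def)
  have lh: "lin_hyperplane H" using hyp HA by auto
  have "v \<notin> H"
  proof
    assume "v \<in> H"
    have "subspace H" using nrm_props[OF lh] subspace_hyperplane by metis
    then have "span {v} \<subseteq> H" using \<open>v \<in> H\<close> by (simp add: span_minimal)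
    then show False using HA l_span by simp
  qed
  then show ?thesis using bn_props[OF lh] HA by (simp add: b_def)
qed

lemma loc_props:
  assumes "H \<in> loc A l"
  shows "nrm H \<noteq> 0 \<and> H = {x. nrm H \<bullet> x = 0} \<and> nrm H \<bullet> v = 0 \<and> H \<in> A"
proof -
  have HA: "H \<in> A" "l \<subseteq> H" using assms by (auto simp: loc_def)
  have lh: "lin_hyperplane H" using hyp HA by auto
  then show ?thesis using nrm_props[OF lh] HA vl by blast
qed

lemma D_conn: "connected D" using Dc in_components_connected by blast

lemma D_avoid: "y \<in> D \<Longrightarrow> H \<in> loc A l \<Longrightarrow> y \<notin> H"
  using in_components_subset[OF Dc] by auto

lemma cA: "c \<subseteq> - \<Union>A" using in_components_subset[OF cch] .

lemma c_conn: "connected c" using cch in_components_connected by blast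

lemma c_pos:
  assumes "y \<in> c" "H \<in> N"
  shows "b H \<bullet> y > 0"
proof (rule ccontr)
  have H: "H = {x. b H \<bullet> x = 0}" "b H \<bullet> v = 1" "H \<in> A" using N_props[OF assms(2)] by auto
  have av: "\<forall>x\<in>c. b H \<bullet> x \<noteq> 0" using cA H by blast
  assume "\<not> b H \<bullet> y > 0"
  then have "b H \<bullet> y < 0" using av assms(1) by force
  then have "\<forall>x\<in>c. b H \<bullet> x < 0" using conn_side[OF c_conn av assms(1)] by blast
  then have "c \<subseteq> {x. b H \<bullet> x \<le> 0}" by force
  then have "closure c \<subseteq> {x. b H \<bullet> x \<le> 0}" by (rule closure_minimal) (rule closed_halfspace_le)
  then show False using vc H by auto
qed

lemma ker_sub:
  assumes "H \<in> N" "H' \<in> N" "b H \<bullet> y = b H' \<bullet> y"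
  shows "y \<in> ssum l (H \<inter> H')"
proof -
  define s where "s = b H \<bullet> y"
  have "y - s *\<^sub>R v \<in> H \<inter> H'"
    using N_props[OF assms(1)] N_props[OF assms(2)] assms(3)
    by (auto simp: s_def inner_diff_right)
  moreover have "s *\<^sub>R v \<in> l" using vl lsub by (simp add: subspace_scale)
  moreover have "y = s *\<^sub>R v + (y - s *\<^sub>R v)" by simp
  ultimately show ?thesis unfolding ssum_def by blast
qed

lemma X_loc:
  assumes "H \<in> N" "H' \<in> N" "H \<noteq> H'"
  shows "ssum l (H \<inter> H') \<in> loc A l"
proof -
  have "H \<in> A" "H' \<in> A" "\<not> l \<subseteq> H" "\<not> l \<subseteq> H'" using assms by (auto simp: N_def loc_def)
  then have "ssum l (H \<inter> H') \<in> A" using modular assms(3) by blast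
  moreover have "l \<subseteq> ssum l (H \<inter> H')"
  proof
    fix u assume "u \<in> l"
    have "0 \<in> H \<inter> H'" using N_props[OF assms(1)] N_props[OF assms(2)] by auto
    moreover have "u = u + 0" by simp
    ultimately show "u \<in> ssum l (H \<inter> H')" unfolding ssum_def using \<open>u \<in> l\<close>
      by blast
  qed
  ultimately show ?thesis by (simp add: loc_def)
qed

lemma D_diff_nz:
  assumes "H \<in> N" "H' \<in> N" "H \<noteq> H'" "y \<in> D"
  shows "(b H - b H') \<bullet> y \<noteq> 0"
proof
  assume "(b H - b H') \<bullet> y = 0"
  then have "y \<in> ssum l (H \<inter> H')" using ker_sub[OF assms(1,2)] by (simp add: inner_diff_left)
  then show False using D_avoid[OF assms(4) X_loc[OF assms(1-3)]] by simp
qed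

lemma order_const:
  assumes "H \<in> N" "H' \<in> N" "H \<noteq> H'" "y \<in> D" "z \<in> D" "b H \<bullet> y < b H' \<bullet> y"
  shows "b H \<bullet> z < b H' \<bullet> z"
proof -
  have "(b H - b H') \<bullet> z < 0"
    by (rule conn_side[OF D_conn _ assms(4,5)])
       (use D_diff_nz[OF assms(1-3)] assms(6) in \<open>auto simp: inner_diff_left\<close>)
  then show ?thesis by (simp add: inner_diff_left)
qed

lemma seg_neg: "w \<bullet> y1 < 0 \<Longrightarrow> w \<bullet> y2 < 0 \<Longrightarrow> x \<in> closed_segment y1 y2 \<Longrightarrow> w \<bullet> x < 0"
  using closed_segment_subset[of y1 "{x. w \<bullet> x < 0}" y2] convex_halfspace_lt[of w 0] by auto

lemma seg_pos: "w \<bullet> y1 > 0 \<Longrightarrow> w \<bullet> y2 > 0 \<Longrightarrow> x \<in> closed_segment y1 y2 \<Longrightarrow> w \<bullet> x > 0"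
  using closed_segment_subset[of y1 "{x. w \<bullet> x > 0}" y2] convex_halfspace_gt[of 0 w] by auto

lemma L1_char:
  assumes C: "C \<in> components (- \<Union>A)" "C \<subseteq> D" and y: "y \<in> C"
  shows "L1 A c C = {H \<in> N. b H \<bullet> y < 0}"
proof
  have CA: "C \<subseteq> - \<Union>A" using in_components_subset[OF C(1)] .
  have Cc: "connected C" using in_components_connected[OF C(1)] .
  show "L1 A c C \<subseteq> {H \<in> N. b H \<bullet> y < 0}"
  proof
    fix H assume "H \<in> L1 A c C"
    then obtain a where HA: "H \<in> A" and a: "H = {x. a \<bullet> x = 0}" "\<forall>x\<in>c. a \<bullet> x < 0" "\<forall>x\<in>C. 0 < a \<bullet> x"
      by (auto simp: L1_def separates_def)
    have HN: "H \<in> N"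
    proof (rule ccontr)
      assume "H \<notin> N"
      then have Hl: "H \<in> loc A l" using HA by (simp add: N_def)
      obtain z where "z \<in> D" "a \<bullet> z = 0"
        using connected_ivt_hyperplane[OF D_conn, of y0 y a 0] y0c cD y C(2) a by force
      then show False using D_avoid[OF _ Hl] a by auto
    qed
    have H: "H = {x. b H \<bullet> x = 0}" using N_props[OF HN] by auto
    have yH: "b H \<bullet> y \<noteq> 0" using CA y H HA by blast
    have "b H \<bullet> y < 0"
    proof (rule ccontr)
      assume "\<not> b H \<bullet> y < 0"
      then have yp: "b H \<bullet> y > 0" using yH by simp
      have y0p: "b H \<bullet> y0 > 0" using c_pos[OF y0c HN] .
      obtain z where z: "z \<in> closed_segment y0 y" "a \<bullet> z = 0"
        using connected_ivt_hyperplane[OF connected_segment[of y0 y], of y0 y a 0] a y y0c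
        by (metis ends_in_segment(1) ends_in_segment(2) less_eq_real_def)
      then have "b H \<bullet> z > 0" using seg_pos[OF y0p yp] by blast
      moreover have "z \<in> H" using z a by blast
      ultimately show False using memhyp[OF H] by force
    qed
    then show "H \<in> {H \<in> N. b H \<bullet> y < 0}" using HN by simp
  qed
  show "{H \<in> N. b H \<bullet> y < 0} \<subseteq> L1 A c C"
  proof
    fix H assume H: "H \<in> {H \<in> N. b H \<bullet> y < 0}"
    then have HN: "H \<in> N" and yn: "b H \<bullet> y < 0" by auto
    have Hb: "H = {x. b H \<bullet> x = 0}" "H \<in> A" using N_props[OF HN] by auto
    have av: "\<forall>x\<in>C. b H \<bullet> x \<noteq> 0" using CA Hb by blast
    have "\<forall>z\<in>C. b H \<bullet> z < 0" using conn_side[OF Cc av y _ yn] by blast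
    moreover have "\<forall>x\<in>c. b H \<bullet> x > 0" using c_pos HN by blast
    ultimately have "separates H c C" unfolding separates_def using Hb
      by (intro exI[of _ "- b H"]) auto
    then show "H \<in> L1 A c C" using Hb by (simp add: L1_def)
  qed
qed

end

lemma ker_prop:
  fixes u w :: "'a::real_inner"
  assumes "w \<noteq> 0" "u \<noteq> 0" "\<forall>x. w \<bullet> x = 0 \<longrightarrow> u \<bullet> x = 0"
  shows "\<exists>\<mu>. \<mu> \<noteq> 0 \<and> (\<forall>x. u \<bullet> x = \<mu> * (w \<bullet> x))"
proof -
  define \<mu> where "\<mu> = (u \<bullet> w) / (w \<bullet> w)"
  have ww: "w \<bullet> w \<noteq> 0" using assms(1) by simp
  have eq: "u \<bullet> x = \<mu> * (w \<bullet> x)" for x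
  proof -
    define x' where "x' = x - ((w \<bullet> x) / (w \<bullet> w)) *\<^sub>R w"
    have "w \<bullet> x' = 0" using ww by (simp add: x'_def inner_diff_right)
    then have "u \<bullet> x' = 0" using assms(3) by blast
    then show ?thesis using ww by (simp add: x'_def inner_diff_right \<mu>_def inner_commute field_simps)
  qed
  moreover have "\<mu> \<noteq> 0"
  proof
    assume "\<mu> = 0"
    then have "u \<bullet> u = 0" using eq by simp
    then show False using assms(2) by simp
  qed
  ultimately show ?thesis by blast
qed

context sarr
begin

lemma seg_nz:
  assumes "w \<bullet> y1 \<noteq> 0" "w \<bullet> y2 \<noteq> 0" "w \<bullet> y1 < 0 \<longleftrightarrow> w \<bullet> y2 < 0" "x \<in> closed_segment y1 y2"
  shows "w \<bullet> x \<noteq> 0"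
proof (cases "w \<bullet> y1 < 0")
  case True
  then show ?thesis using seg_neg[of w y1 y2 x] assms by auto
next
  case False
  then have "w \<bullet> y1 > 0" "w \<bullet> y2 > 0" using assms by auto
  then show ?thesis using seg_pos[of w y1 y2 x] assms by auto
qed

lemma cham_eq:
  assumes C1: "C1 \<in> components (- \<Union>A)" "C1 \<subseteq> D"
    and C2: "C2 \<in> components (- \<Union>A)" "C2 \<subseteq> D"
    and L: "L1 A c C1 = L1 A c C2"
  shows "C1 = C2"
proof -
  obtain y1 where y1: "y1 \<in> C1" using in_components_nonempty[OF C1(1)] by auto
  obtain y2 where y2: "y2 \<in> C2" using in_components_nonempty[OF C2(1)] by auto
  have y1A: "y1 \<in> - \<Union>A" using y1 in_components_subset[OF C1(1)] by auto
  have y2A: "y2 \<in> - \<Union>A" using y2 in_components_subset[OF C2(1)] by auto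
  have y1D: "y1 \<in> D" and y2D: "y2 \<in> D" using y1 y2 C1 C2 by auto
  have LL: "{H \<in> N. b H \<bullet> y1 < 0} = {H \<in> N. b H \<bullet> y2 < 0}"
    using L L1_char[OF C1 y1] L1_char[OF C2 y2] by simp
  have seg: "closed_segment y1 y2 \<subseteq> - \<Union>A"
  proof
    fix x assume x: "x \<in> closed_segment y1 y2"
    show "x \<in> - \<Union>A"
    proof (rule ccontr)
      assume "x \<notin> - \<Union>A"
      then obtain H where H: "H \<in> A" "x \<in> H" by auto
      show False
      proof (cases "H \<in> loc A l")
        case True
        note lp = loc_props[OF True]
        have n1: "nrm H \<bullet> y1 \<noteq> 0" using D_avoid[OF y1D True] memhyp[of H "nrm H"] lp by blast
        have n2: "nrm H \<bullet> y2 \<noteq> 0" using D_avoid[OF y2D True] memhyp[of H "nrm H"] lp by blast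
        have av: "\<forall>z\<in>D. nrm H \<bullet> z \<noteq> 0" using D_avoid[OF _ True] memhyp[of H "nrm H"] lp by blast
        have "nrm H \<bullet> y1 < 0 \<longleftrightarrow> nrm H \<bullet> y2 < 0"
          using conn_side[OF D_conn av y1D y2D] conn_side[OF D_conn av y2D y1D] by blast
        then have "nrm H \<bullet> x \<noteq> 0" using seg_nz[OF n1 n2 _ x] by blast
        then show False using H(2) memhyp[of H "nrm H"] lp by blast
      next
        case False
        then have HN: "H \<in> N" using H by (simp add: N_def)
        note np = N_props[OF HN]
        have n1: "b H \<bullet> y1 \<noteq> 0" using y1A H(1) memhyp[of H "b H"] np by blast
        have n2: "b H \<bullet> y2 \<noteq> 0" using y2A H(1) memhyp[of H "b H"] np by blast
        have "b H \<bullet> y1 < 0 \<longleftrightarrow> b H \<bullet> y2 < 0" using LL HN by blast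
        then have "b H \<bullet> x \<noteq> 0" using seg_nz[OF n1 n2 _ x] by blast
        then show False using H(2) memhyp[of H "b H"] np by blast
      qed
    qed
  qed
  have "C1 = connected_component_set (- \<Union>A) y1"
    using C1(1) y1 by (metis components_iff connected_component_eq)
  moreover have "closed_segment y1 y2 \<subseteq> connected_component_set (- \<Union>A) y1"
    by (rule connected_component_maximal) (use seg in auto)
  ultimately have "y2 \<in> C1" by auto
  then show ?thesis using components_eq[OF C1(1) C2(1)] y2 by blast
qed

lemma D_eq: "D = connected_component_set (- \<Union>(loc A l)) y0"
  using Dc y0c cD by (metis components_iff connected_component_eq subsetD)

lemma line_D: "y0 + r *\<^sub>R v \<in> D"
proof -
  let ?S = "range (\<lambda>r. y0 + r *\<^sub>R v)"
  have "connected ?S"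
    by (rule connected_continuous_image) (auto intro!: continuous_intros)
  moreover have "?S \<subseteq> - \<Union>(loc A l)"
  proof
    fix x assume "x \<in> ?S"
    then obtain t where x: "x = y0 + t *\<^sub>R v" by auto
    show "x \<in> - \<Union>(loc A l)"
    proof (rule ccontr)
      assume "x \<notin> - \<Union>(loc A l)"
      then obtain H where H: "H \<in> loc A l" "x \<in> H" by auto
      note lp = loc_props[OF H(1)]
      have "nrm H \<bullet> x = nrm H \<bullet> y0" using lp by (simp add: x inner_add_right)
      moreover have "nrm H \<bullet> y0 \<noteq> 0" using D_avoid[OF _ H(1)] y0c cD memhyp[of H "nrm H"] lp by blast
      ultimately show False using H(2) memhyp[of H "nrm H"] lp by auto
    qed
  qed
  ultimately have "?S \<subseteq> D" unfolding D_eq by (intro connected_component_maximal) auto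
  then show ?thesis by auto
qed

definition "g H = b H \<bullet> y0"
definition "hs = map (inv_into N g) (sorted_list_of_set (g ` N))"
definition "n = card N"

lemma finN: "finite N" using fin by (simp add: N_def)

lemma inj_g: "inj_on g N"
proof
  fix H H' assume H: "H \<in> N" "H' \<in> N" "g H = g H'"
  show "H = H'"
  proof (rule ccontr)
    assume "H \<noteq> H'"
    then show False using D_diff_nz[OF H(1,2) _ subsetD[OF cD y0c]] H(3)
      by (simp add: g_def inner_diff_left)
  qed
qed

lemma hs_set: "set hs = N"
  unfolding hs_def using inj_g finN by (simp add: inv_into_image_cancel)

lemma hs_len: "length hs = n"
  unfolding hs_def n_def using inj_g finN by (simp add: card_image)

lemma hs_dist: "distinct hs"
  using hs_set hs_len by (simp add: card_distinct n_def)

lemma hs_g: "i < n \<Longrightarrow> g (hs ! i) = sorted_list_of_set (g ` N) ! i"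
proof -
  assume i: "i < n"
  have len: "length (sorted_list_of_set (g ` N)) = n" using hs_len by (simp add: hs_def)
  have "sorted_list_of_set (g ` N) ! i \<in> set (sorted_list_of_set (g ` N))"
    using i len by (intro nth_mem) simp
  then have "sorted_list_of_set (g ` N) ! i \<in> g ` N" using finN by simp
  then show ?thesis using i hs_len unfolding hs_def by (simp add: f_inv_into_f)
qed

lemma hs_mono: "i < j \<Longrightarrow> j < n \<Longrightarrow> g (hs ! i) < g (hs ! j)"
proof -
  assume ij: "i < j" "j < n"
  have len: "length (sorted_list_of_set (g ` N)) = n" using hs_len by (simp add: hs_def)
  have "sorted_wrt (<) (sorted_list_of_set (g ` N))" by (rule strict_sorted_list_of_set)
  then show ?thesis using ij len hs_g by (simp add: sorted_wrt_nth_less)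
qed

lemma hs_le: "i \<le> j \<Longrightarrow> j < n \<Longrightarrow> g (hs ! i) \<le> g (hs ! j)"
  using hs_mono[of i j] by (cases "i = j") simp_all

lemma hs_N: "i < n \<Longrightarrow> hs ! i \<in> N"
  using nth_mem[of i hs] hs_set hs_len by simp

definition "s m = (if m = 0 then 0 else if m = n then g (hs ! (n - 1)) + 1
   else (g (hs ! (m - 1)) + g (hs ! m)) / 2)"

lemma s_prop:
  assumes "m \<le> n" "i < n"
  shows "(i < m \<longrightarrow> g (hs ! i) < s m) \<and> (m \<le> i \<longrightarrow> s m < g (hs ! i))"
proof (cases "m = 0")
  case True
  have "g (hs ! i) > 0" using c_pos[OF y0c hs_N[OF assms(2)]] by (simp add: g_def)
  then show ?thesis using True by (simp add: s_def)
next
  case m0: False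
  show ?thesis
  proof (cases "m = n")
    case True
    have "g (hs ! i) \<le> g (hs ! (n - 1))" using assms by (intro hs_le) auto
    then show ?thesis using True m0 assms by (simp add: s_def)
  next
    case False
    then have mn: "m < n" using assms by simp
    have a: "g (hs ! (m - 1)) < g (hs ! m)" using m0 mn by (intro hs_mono) auto
    show ?thesis
    proof (intro conjI impI)
      assume "i < m"
      then have "g (hs ! i) \<le> g (hs ! (m - 1))" using mn by (intro hs_le) auto
      then show "g (hs ! i) < s m" using a m0 False by (simp add: s_def)
    next
      assume "m \<le> i"
      then have "g (hs ! m) \<le> g (hs ! i)" using assms by (intro hs_le) auto
      then show "s m < g (hs ! i)" using a m0 False by (simp add: s_def)
    qed
  qed
qed

definition "p m = y0 + (- s m) *\<^sub>R v"
definition "Cm m = connected_component_set (- \<Union>A) (p m)"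

lemma p_D: "p m \<in> D" unfolding p_def by (rule line_D)

lemma bp: "H \<in> N \<Longrightarrow> b H \<bullet> p m = g H - s m"
proof -
  assume "H \<in> N"
  then have "b H \<bullet> v = 1" using N_props by blast
  then show ?thesis by (simp add: p_def g_def inner_diff_right)
qed

lemma set_take_char: "m \<le> length xs \<Longrightarrow> H \<in> set (take m xs) \<longleftrightarrow> (\<exists>i<m. H = xs ! i)"
proof
  assume m: "m \<le> length xs"
  assume "H \<in> set (take m xs)"
  then obtain k where k: "k < length (take m xs)" "take m xs ! k = H" by (auto simp: in_set_conv_nth)
  then have "k < m" using m by simp
  then show "\<exists>i<m. H = xs ! i" using k by auto
next
  assume "m \<le> length xs" "\<exists>i<m. H = xs ! i"
  then show "H \<in> set (take m xs)" using nth_in_take by blast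
qed

lemma N_idx: "H \<in> N \<Longrightarrow> \<exists>i<n. H = hs ! i"
  using hs_set hs_len in_set_conv_nth[of H hs] by auto

lemma p_notA:
  assumes "m \<le> n"
  shows "p m \<in> - \<Union>A"
proof (rule ccontr)
  assume "p m \<notin> - \<Union>A"
  then obtain H where H: "H \<in> A" "p m \<in> H" by auto
  show False
  proof (cases "H \<in> loc A l")
    case True
    then show ?thesis using D_avoid[OF p_D True] H by simp
  next
    case False
    then have HN: "H \<in> N" using H by (simp add: N_def)
    obtain i where i: "i < n" "H = hs ! i" using N_idx[OF HN] by auto
    have "g H \<noteq> s m" using s_prop[OF assms i(1)] i(2) by (cases "i < m") auto
    then have "b H \<bullet> p m \<noteq> 0" using bp[OF HN] by simp
    then show False using H(2) memhyp[of H "b H"] N_props[OF HN] by blast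
  qed
qed

lemma Cm_comp: "m \<le> n \<Longrightarrow> Cm m \<in> components (- \<Union>A)"
  unfolding Cm_def using p_notA by (auto simp: components_iff)

lemma Cm_D: "Cm m \<subseteq> D"
proof -
  have sub: "- \<Union>A \<subseteq> - \<Union>(loc A l)" by (auto simp: loc_def)
  have "connected_component_set (- \<Union>(loc A l)) (p m) = D"
    using p_D D_eq by (metis connected_component_eq)
  then show ?thesis unfolding Cm_def using connected_component_mono[OF sub] by blast
qed

lemma p_Cm: "m \<le> n \<Longrightarrow> p m \<in> Cm m"
  unfolding Cm_def using p_notA by simp

lemma L1_Cm:
  assumes "m \<le> n"
  shows "L1 A c (Cm m) = set (take m hs)"
proof -
  have "L1 A c (Cm m) = {H \<in> N. b H \<bullet> p m < 0}"
    using L1_char[OF Cm_comp[OF assms] Cm_D p_Cm[OF assms]] .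
  also have "\<dots> = set (take m hs)"
  proof (intro set_eqI iffI)
    fix H assume "H \<in> {H \<in> N. b H \<bullet> p m < 0}"
    then have HN: "H \<in> N" and "g H < s m" using bp by auto
    obtain i where i: "i < n" "H = hs ! i" using N_idx[OF HN] by auto
    then have "i < m" using s_prop[OF assms i(1)] \<open>g H < s m\<close> by (meson not_le order.asym)
    then show "H \<in> set (take m hs)" using i assms hs_len by (auto intro: nth_in_take)
  next
    fix H assume "H \<in> set (take m hs)"
    then obtain i where i: "i < m" "H = hs ! i" using set_take_char[of m hs] assms hs_len by auto
    then have "i < n" using assms by simp
    then show "H \<in> {H \<in> N. b H \<bullet> p m < 0}"
      using s_prop[OF assms \<open>i < n\<close>] i hs_N bp by auto
  qed
  finally show ?thesis .
qed

end

context sarr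
begin

definition "cs = map Cm [0..<Suc n]"

lemma chamber_quot_sub: "chamber A C \<Longrightarrow> quot_chamber A l C = D \<Longrightarrow> C \<subseteq> D"
  using chamber_in_quot[of C A l] by (auto simp: chamber_def)

lemma part1:
  "distinct cs \<and> hd cs = c \<and>
   set cs = {c'. chamber A c' \<and> quot_chamber A l c' = D} \<and>
   distinct hs \<and> length cs = length hs + 1 \<and> set hs = A - loc A l \<and>
   (\<forall>i < length cs. L1 A c (cs ! i) = set (take i hs))"
proof (intro conjI)
  have cardt: "m \<le> n \<Longrightarrow> card (set (take m hs)) = m" for m
    using hs_dist hs_len by (simp add: distinct_card)
  show "distinct cs" unfolding cs_def distinct_map
  proof
    show "inj_on Cm (set [0..<Suc n])"
    proof
      fix m m' assume mm: "m \<in> set [0..<Suc n]" "m' \<in> set [0..<Suc n]" "Cm m = Cm m'"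
      then have "m \<le> n" "m' \<le> n" by auto
      then have "set (take m hs) = set (take m' hs)" using L1_Cm[of m] L1_Cm[of m'] mm(3) by simp
      then have "card (set (take m hs)) = card (set (take m' hs))" by simp
      then show "m = m'" using cardt \<open>m \<le> n\<close> \<open>m' \<le> n\<close> by simp
    qed
  qed simp
  have "p 0 = y0" by (simp add: p_def s_def)
  then have "Cm 0 = c" unfolding Cm_def using cch y0c by (metis components_iff connected_component_eq)
  then show "hd cs = c" unfolding cs_def by (simp add: upt_conv_Cons del: upt_Suc)
  show "set cs = {c'. chamber A c' \<and> quot_chamber A l c' = D}"
  proof (intro set_eqI iffI)
    fix C assume "C \<in> set cs"
    then have "C \<in> Cm ` {0..<Suc n}" unfolding cs_def by (simp del: upt_Suc)
    then obtain m where m: "m \<le> n" "C = Cm m" by (auto simp: less_Suc_eq_le)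
    then show "C \<in> {c'. chamber A c' \<and> quot_chamber A l c' = D}"
      using Cm_comp[OF m(1)] quot_eq[OF Dc _ Cm_D] p_Cm[OF m(1)] by (auto simp: chamber_def)
  next
    fix C assume "C \<in> {c'. chamber A c' \<and> quot_chamber A l c' = D}"
    then have Cc: "C \<in> components (- \<Union>A)" and CD: "C \<subseteq> D"
      using chamber_quot_sub by (auto simp: chamber_def)
    obtain y where y: "y \<in> C" using in_components_nonempty[OF Cc] by auto
    have yD: "y \<in> D" using y CD by auto
    have L: "L1 A c C = {H \<in> N. b H \<bullet> y < 0}" by (rule L1_char[OF Cc CD y])
    have dc: "\<forall>i j. i \<le> j \<longrightarrow> j < n \<longrightarrow> b (hs ! j) \<bullet> y < 0 \<longrightarrow> b (hs ! i) \<bullet> y < 0"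
    proof (intro allI impI)
      fix i j assume ij: "i \<le> j" "j < n" "b (hs ! j) \<bullet> y < 0"
      show "b (hs ! i) \<bullet> y < 0"
      proof (cases "i = j")
        case False
        then have "i < j" using ij by simp
        then have "g (hs ! i) < g (hs ! j)" using hs_mono ij by blast
        moreover have "hs ! i \<noteq> hs ! j" using nth_eq_iff_index_eq[OF hs_dist, of i j] hs_len ij \<open>i < j\<close> by simp
        ultimately have "b (hs ! i) \<bullet> y < b (hs ! j) \<bullet> y"
          using order_const[OF hs_N hs_N _ subsetD[OF cD y0c] yD] ij \<open>i < j\<close>
          by (simp add: g_def)
        then show ?thesis using ij by simp
      qed (use ij in simp)
    qed
    obtain m where m: "m \<le> n" "\<forall>i<n. b (hs ! i) \<bullet> y < 0 \<longleftrightarrow> i < m"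
      using downward_closed_prefix[OF dc] by blast
    have "L1 A c C = set (take m hs)"
    proof (unfold L, intro set_eqI iffI)
      fix H assume "H \<in> {H \<in> N. b H \<bullet> y < 0}"
      then obtain i where "i < n" "H = hs ! i" "b H \<bullet> y < 0" using N_idx by blast
      then show "H \<in> set (take m hs)" using m hs_len by (auto intro: nth_in_take)
    next
      fix H assume "H \<in> set (take m hs)"
      then obtain i where i: "i < m" "H = hs ! i" using set_take_char[of m hs] m hs_len by auto
      then show "H \<in> {H \<in> N. b H \<bullet> y < 0}" using m hs_N by auto
    qed
    then have "C = Cm m" using cham_eq[OF Cc CD Cm_comp[OF m(1)] Cm_D] L1_Cm[OF m(1)] by simp
    then have "C \<in> Cm ` {0..<Suc n}" using m by auto
    then show "C \<in> set cs" unfolding cs_def by (simp del: upt_Suc)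
  qed
  show "distinct hs" by (rule hs_dist)
  show "length cs = length hs + 1" by (simp add: cs_def hs_len)
  show "set hs = A - loc A l" using hs_set by (simp add: N_def)
  show "\<forall>i < length cs. L1 A c (cs ! i) = set (take i hs)"
    using L1_Cm by (auto simp: cs_def nth_append simp del: upt_Suc)
qed

lemma chain_order:
  assumes "distinct cs' \<and> hd cs' = c \<and>
            set cs' = {c'. chamber A c' \<and> quot_chamber A l c' = D} \<and>
            distinct hs' \<and> length cs' = length hs' + 1 \<and> set hs' = A - loc A l \<and>
            (\<forall>i < length cs'. L1 A c (cs' ! i) = set (take i hs'))"
    and ij: "i < j" "j < length hs'" and yD: "y \<in> D"
  shows "b (hs' ! i) \<bullet> y < b (hs' ! j) \<bullet> y"
proof -
  have jc: "j < length cs'" using assms ij by simp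
  then have "cs' ! j \<in> set cs'" by simp
  then have ch: "chamber A (cs' ! j)" "quot_chamber A l (cs' ! j) = D" using assms by auto
  then have C: "cs' ! j \<in> components (- \<Union>A)" "cs' ! j \<subseteq> D"
    using chamber_quot_sub by (auto simp: chamber_def)
  obtain y' where y': "y' \<in> cs' ! j" using in_components_nonempty[OF C(1)] by auto
  have "set (take j hs') = {H \<in> N. b H \<bullet> y' < 0}"
    using assms jc L1_char[OF C y'] by auto
  moreover have "hs' ! i \<in> set (take j hs')" using ij by (intro nth_in_take) auto
  moreover have "hs' ! j \<notin> set (take j hs')" using assms ij nth_notin_take by blast
  moreover have N: "hs' ! i \<in> N" "hs' ! j \<in> N" using assms ij by (auto simp: N_def)
  ultimately have "b (hs' ! i) \<bullet> y' < b (hs' ! j) \<bullet> y'" by auto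
  moreover have "hs' ! i \<noteq> hs' ! j"
  proof -
    have "distinct hs'" using assms by simp
    then show ?thesis using nth_eq_iff_index_eq[of hs' i j] ij by simp
  qed
  ultimately show ?thesis using order_const[OF N _ _ yD] y' C(2) by blast
qed

lemma part2:
  assumes chain: "distinct cs' \<and> hd cs' = c \<and>
            set cs' = {c'. chamber A c' \<and> quot_chamber A l c' = D} \<and>
            distinct hs' \<and> length cs' = length hs' + 1 \<and> set hs' = A - loc A l \<and>
            (\<forall>i < length cs'. L1 A c (cs' ! i) = set (take i hs'))"
    and ijk: "i < j" "j < k" "k < length hs'" and inc: "incident c (ssum l (hs' ! i \<inter> hs' ! k))"
  shows "hs' ! i \<inter> hs' ! j = hs' ! i \<inter> hs' ! k \<and> hs' ! i \<inter> hs' ! k = hs' ! j \<inter> hs' ! k"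
proof -
  define Hi Hj Hk where "Hi = hs' ! i" "Hj = hs' ! j" "Hk = hs' ! k"
  have N: "Hi \<in> N" "Hj \<in> N" "Hk \<in> N" using chain ijk by (auto simp: N_def Hi_Hj_Hk_def)
  have dh: "distinct hs'" using chain by simp
  have dij: "Hi \<noteq> Hj" "Hj \<noteq> Hk" "Hi \<noteq> Hk" unfolding Hi_Hj_Hk_def
    using nth_eq_iff_index_eq[OF dh, of i j] nth_eq_iff_index_eq[OF dh, of j k]
      nth_eq_iff_index_eq[OF dh, of i k] ijk by auto
  define bi bj bk where "bi = b Hi" "bj = b Hj" "bk = b Hk"
  have mi: "x \<in> Hi \<longleftrightarrow> bi \<bullet> x = 0" for x using N_props[OF N(1)] memhyp unfolding bi_bj_bk_def by blast
  have mj: "x \<in> Hj \<longleftrightarrow> bj \<bullet> x = 0" for x using N_props[OF N(2)] memhyp unfolding bi_bj_bk_def by blast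
  have mk: "x \<in> Hk \<longleftrightarrow> bk \<bullet> x = 0" for x using N_props[OF N(3)] memhyp unfolding bi_bj_bk_def by blast
  have v1: "bi \<bullet> v = 1" "bj \<bullet> v = 1" "bk \<bullet> v = 1" using N_props N unfolding bi_bj_bk_def by auto
  have bne: "bi \<noteq> bj" "bj \<noteq> bk" "bi \<noteq> bk"
    using dij N_props N unfolding bi_bj_bk_def by metis+
  have o1: "\<forall>y\<in>D. bi \<bullet> y < bj \<bullet> y" using chain_order[OF chain ijk(1)] ijk unfolding Hi_Hj_Hk_def bi_bj_bk_def by auto
  have o2: "\<forall>y\<in>D. bj \<bullet> y < bk \<bullet> y" using chain_order[OF chain ijk(2)] ijk unfolding Hi_Hj_Hk_def bi_bj_bk_def by auto
  have "c \<subseteq> {x. (bj - bi) \<bullet> x \<ge> 0}" using o1 cD by (force simp: inner_diff_left)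
  then have cl1: "closure c \<subseteq> {x. (bj - bi) \<bullet> x \<ge> 0}" by (rule closure_minimal) (rule closed_halfspace_ge)
  have "c \<subseteq> {x. (bk - bj) \<bullet> x \<ge> 0}" using o2 cD by (force simp: inner_diff_left)
  then have cl2: "closure c \<subseteq> {x. (bk - bj) \<bullet> x \<ge> 0}" by (rule closure_minimal) (rule closed_halfspace_ge)
  define X where "X = ssum l (Hi \<inter> Hk)"
  have Xker: "X = {x. (bk - bi) \<bullet> x = 0}"
  proof (intro set_eqI iffI)
    fix x assume "x \<in> X"
    then obtain u w where uw: "x = u + w" "u \<in> l" "w \<in> Hi \<inter> Hk" unfolding X_def ssum_def by blast
    obtain r where "u = r *\<^sub>R v" using l_mult uw(2) by blast
    then show "x \<in> {x. (bk - bi) \<bullet> x = 0}" using uw mi mk v1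
      by (simp add: inner_diff_left inner_add_right)
  next
    fix x assume "x \<in> {x. (bk - bi) \<bullet> x = 0}"
    then have "b Hi \<bullet> x = b Hk \<bullet> x" by (simp add: inner_diff_left bi_bj_bk_def)
    then show "x \<in> X" unfolding X_def by (rule ker_sub[OF N(1) N(3)])
  qed
  define S where "S = closure c \<inter> X"
  have S0: "\<forall>x\<in>S. (bj - bi) \<bullet> x = 0"
  proof
    fix x assume "x \<in> S"
    then have "(bj - bi) \<bullet> x \<ge> 0" "(bk - bj) \<bullet> x \<ge> 0" "(bk - bi) \<bullet> x = 0"
      using cl1 cl2 Xker unfolding S_def by auto
    then show "(bj - bi) \<bullet> x = 0" by (simp add: inner_diff_left)
  qed
  have affX: "affine X" unfolding Xker by (rule affine_hyperplane)
  have "0 \<in> X" unfolding Xker by simp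
  then have "aff_dim X \<noteq> -1" by (metis aff_dim_empty empty_iff)
  then have Sne: "S \<noteq> {}" using inc unfolding incident_def S_def X_def Hi_Hj_Hk_def by auto
  have hullS: "affine hull S = X"
  proof (rule affine_dim_equal)
    show "affine (affine hull S)" by simp
    show "affine X" by (rule affX)
    show "affine hull S \<noteq> {}" using Sne by simp
    show "affine hull S \<subseteq> X" by (rule hull_minimal) (use affX in \<open>auto simp: S_def\<close>)
    show "aff_dim (affine hull S) = aff_dim X"
      using inc unfolding incident_def S_def X_def Hi_Hj_Hk_def by simp
  qed
  have "affine hull S \<subseteq> {x. (bj - bi) \<bullet> x = 0}"
    by (rule hull_minimal) (use S0 affine_hyperplane in auto)
  then have ker: "\<forall>x. (bk - bi) \<bullet> x = 0 \<longrightarrow> (bj - bi) \<bullet> x = 0" using hullS Xker by blast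
  obtain \<mu> where mu: "\<mu> \<noteq> 0" "\<forall>x. (bj - bi) \<bullet> x = \<mu> * ((bk - bi) \<bullet> x)"
    using ker_prop[OF _ _ ker] bne by auto
  have mu1: "\<mu> \<noteq> 1"
  proof
    assume "\<mu> = 1"
    then have "(bj - bk) \<bullet> x = 0" for x using mu(2)[rule_format, of x] by (simp add: inner_diff_left)
    then have "(bj - bk) \<bullet> (bj - bk) = 0" by blast
    then show False using bne by simp
  qed
  have e1: "Hi \<inter> Hj = Hi \<inter> Hk"
  proof (intro set_eqI)
    fix x
    show "x \<in> Hi \<inter> Hj \<longleftrightarrow> x \<in> Hi \<inter> Hk"
      using mu(2)[rule_format, of x] mu(1) by (auto simp: mi mj mk inner_diff_left)
  qed
  have e2: "Hi \<inter> Hk = Hj \<inter> Hk"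
  proof (intro set_eqI)
    fix x
    have "bk \<bullet> x = 0 \<Longrightarrow> bj \<bullet> x = 0 \<Longrightarrow> bi \<bullet> x = 0"
    proof -
      assume "bk \<bullet> x = 0" "bj \<bullet> x = 0"
      then have "(1 - \<mu>) * (bi \<bullet> x) = 0" using mu(2)[rule_format, of x]
        by (simp add: inner_diff_left algebra_simps)
      then show "bi \<bullet> x = 0" using mu1 by simp
    qed
    then show "x \<in> Hi \<inter> Hk \<longleftrightarrow> x \<in> Hj \<inter> Hk"
      using mu(2)[rule_format, of x] mu(1) by (auto simp: mi mj mk inner_diff_left)
  qed
  show ?thesis using e1 e2 unfolding Hi_Hj_Hk_def by blast
qed

end

theorem proposition4p5:
  fixes A :: "'a::euclidean_space set set" and l c :: "'a set"
  assumes "central_essential_arr A"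
    and "modular_coatom A l"
    and "chamber A c"
    and "incident c l"
  shows "(\<exists>cs hs.
            distinct cs \<and> hd cs = c \<and>
            set cs = {c'. chamber A c' \<and> quot_chamber A l c' = quot_chamber A l c} \<and>
            distinct hs \<and> length cs = length hs + 1 \<and> set hs = A - loc A l \<and>
            (\<forall>i < length cs. L1 A c (cs ! i) = set (take i hs)))
       \<and> (\<forall>cs hs.
            distinct cs \<and> hd cs = c \<and>
            set cs = {c'. chamber A c' \<and> quot_chamber A l c' = quot_chamber A l c} \<and>
            distinct hs \<and> length cs = length hs + 1 \<and> set hs = A - loc A l \<and>
            (\<forall>i < length cs. L1 A c (cs ! i) = set (take i hs))
          \<longrightarrow> (\<forall>i j k. i < j \<and> j < k \<and> k < length hs \<and>
                  incident c (ssum l (hs ! i \<inter> hs ! k)) \<longrightarrow>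
                  hs ! i \<inter> hs ! j = hs ! i \<inter> hs ! k \<and> hs ! i \<inter> hs ! k = hs ! j \<inter> hs ! k))"
proof -
  have fin: "finite A" and hyp: "\<forall>H\<in>A. lin_hyperplane H"
    using assms(1) by (auto simp: central_essential_arr_def)
  have lsub: "subspace l" and ldim: "dim l = 1"
    and modular: "\<forall>H\<in>A. \<forall>H'\<in>A. H \<noteq> H' \<longrightarrow> \<not> l \<subseteq> H \<longrightarrow> \<not> l \<subseteq> H' \<longrightarrow> ssum l (H \<inter> H') \<in> A"
    using assms(2) by (auto simp: modular_coatom_def coatom_def)
  have cch: "c \<in> components (- \<Union>A)" using assms(3) by (simp add: chamber_def)
  have ad: "aff_dim (closure c \<inter> l) = 1"
    using assms(4) aff_dim_subspace[OF lsub] ldim by (simp add: incident_def)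
  obtain v where v: "v \<in> closure c" "v \<in> l" "v \<noteq> 0"
  proof (rule ccontr)
    assume "\<not> thesis"
    then have "closure c \<inter> l \<subseteq> {0}" using that by blast
    then have "aff_dim (closure c \<inter> l) \<le> aff_dim {0::'a}" by (rule aff_dim_subset)
    then show False using ad by simp
  qed
  obtain y0 where y0: "y0 \<in> c" using in_components_nonempty[OF cch] by auto
  have sub: "- \<Union>A \<subseteq> - \<Union>(loc A l)" by (auto simp: loc_def)
  have y0A: "y0 \<in> - \<Union>A" using y0 in_components_subset[OF cch] by auto
  have cc: "c = connected_component_set (- \<Union>A) y0"
    using cch y0 by (metis components_iff connected_component_eq)
  define D where "D = connected_component_set (- \<Union>(loc A l)) y0"
  have y0l: "y0 \<in> - \<Union>(loc A l)" using y0A sub by blast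
  have Dc: "D \<in> components (- \<Union>(loc A l))" unfolding D_def using y0l
    by (auto simp: components_iff)
  have cD: "c \<subseteq> D" unfolding cc D_def by (rule connected_component_mono[OF sub])
  interpret sarr A l c D v y0
    using fin hyp lsub ldim modular cch v Dc cD y0 by unfold_locales auto
  have qc: "quot_chamber A l c = D" using quot_eq[OF Dc _ cD] y0 by auto
  show ?thesis unfolding qc
  proof (rule conjI)
    show "\<exists>cs hs. distinct cs \<and> hd cs = c \<and>
            set cs = {c'. chamber A c' \<and> quot_chamber A l c' = D} \<and>
            distinct hs \<and> length cs = length hs + 1 \<and> set hs = A - loc A l \<and>
            (\<forall>i < length cs. L1 A c (cs ! i) = set (take i hs))"
      using part1 by blast
  next
    show "\<forall>cs hs.
            distinct cs \<and> hd cs = c \<and>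
            set cs = {c'. chamber A c' \<and> quot_chamber A l c' = D} \<and>
            distinct hs \<and> length cs = length hs + 1 \<and> set hs = A - loc A l \<and>
            (\<forall>i < length cs. L1 A c (cs ! i) = set (take i hs))
          \<longrightarrow> (\<forall>i j k. i < j \<and> j < k \<and> k < length hs \<and>
                  incident c (ssum l (hs ! i \<inter> hs ! k)) \<longrightarrow>
                  hs ! i \<inter> hs ! j = hs ! i \<inter> hs ! k \<and> hs ! i \<inter> hs ! k = hs ! j \<inter> hs ! k)"
    proof (intro allI impI)
    fix cs' hs' i j k
    assume ch: "distinct cs' \<and> hd cs' = c \<and>
            set cs' = {c'. chamber A c' \<and> quot_chamber A l c' = D} \<and>
            distinct hs' \<and> length cs' = length hs' + 1 \<and> set hs' = A - loc A l \<and>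
            (\<forall>i < length cs'. L1 A c (cs' ! i) = set (take i hs'))"
      and ijk: "i < j \<and> j < k \<and> k < length hs' \<and> incident c (ssum l (hs' ! i \<inter> hs' ! k))"
    show "hs' ! i \<inter> hs' ! j = hs' ! i \<inter> hs' ! k \<and> hs' ! i \<inter> hs' ! k = hs' ! j \<inter> hs' ! k"
      using part2[OF ch] ijk by blast
    qed
  qed
qed

end
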